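(* Let $G:\{0,1\}^n\to\{0,1\}^N$ be a Boolean circuit and $\mathsf{Ext}:\{0,1\}^N\times\{0,1\}^d\to\{0,1\}^m$ be linear, i.e., for each $r\in\{0,1\}^d$ the map $\mathsf{Ext}(\cdot,r):\mathbb{F}_2^N\to\mathbb{F}_2^m$ is $\mathbb{F}_2$-linear; for each $r$ fix a circuit $\mathsf{Ext}_r$ of fan-in-2 $\oplus$ gates computing $\mathsf{Ext}(\cdot,r)$, and let $C_r:\{0,1\}^n\to\{0,1\}^m$ be the circuit $C_r(s)=\mathsf{Ext}(G(s),r)$ obtained by feeding the outputs of $G$ into $\mathsf{Ext}_r$. Then for every $y\in\{0,1\}^N$ and $r\in\{0,1\}^d$, there is a simple parity reduction from $\tau_y(G)$ to $\tau_z(C_r)$, where $z:=\mathsf{Ext}(y,r)$; that is, $\tau_y(G)\le^{\oplus}\tau_z(C_r)$.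
   Context: For a circuit $G$ with $n$ inputs and $\ell$ outputs, whose gates have fan-in at most 2 over a basis containing $\oplus$, and $b\in\{0,1\}^\ell$, $\tau_b(G)$ is the 3-CNF with variables $x\in\{0,1\}^n$ (inputs) and $\mathsf{hist}\in\{0,1\}^s$, one variable $v_g$ per internal gate $g$ (including output gates; for input gates $v_g$ is the corresponding $x_i$). For every internal gate $g$ with operation $\circ_g$ and children $g_l,g_r$ it contains the clauses of the constraint $v_g=v_{g_l}\circ_g v_{g_r}$ (a 3-CNF of at most 8 clauses), and for each $i\in[\ell]$ with $i$-th output gate $g_i$ it contains the width-1 clause expressing $v_{g_i}=b_i$. Thus $\tau_b(G)$ is satisfiable iff $b\in\mathrm{Range}(G)$. Simple parity reduction: for CNFs $F(x_1,\dots,x_n)$ and $H(y_1,\dots,y_{n'})$, $F\le^{\oplus}H$ if there is an $\mathbb{F}_2$-linear map $\mathsf{redu}:\{0,1\}^n\to\{0,1\}^{n'}$ (each output bit is the XOR of a subset of input bits) such that for every clause $g$ of $H$, one of the following holds: $g\circ\mathsf{redu}\equiv\mathsf{True}$; $g\circ\mathsf{redu}$ equals some clause of $F$; or $g$ is a width-1 clause (a single literal, i.e., an equation $y_i=c$) and $g\circ\mathsf{redu}$ (a linear equation) is the XOR (sum over $\mathbb{F}_2$) of a subset of clauses of $F$, these clauses being width-1. *)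

theory Defs
  imports Main
begin

text \<open>Nodes are numbered: node k < cin C is the k-th input; node cin C + j is the
  j-th internal gate (cgates C ! j = (op, left child, right child)).
  Gates of fan-in < 2 are represented by binary operations ignoring arguments;
  the basis is arbitrary (all binary Boolean functions, which contains xor).\<close>

record circuit =
  cin    :: nat
  cgates :: "((bool \<Rightarrow> bool \<Rightarrow> bool) \<times> nat \<times> nat) list"
  couts  :: "nat list"

definition wf_circuit :: "circuit \<Rightarrow> bool" where
  "wf_circuit C \<longleftrightarrow>
     (\<forall>j < length (cgates C). case cgates C ! j of (f, l, r) \<Rightarrow> l < cin C + j \<and> r < cin C + j) \<and>
     (\<forall>q \<in> set (couts C). q < cin C + length (cgates C))"

definition node_vals :: "circuit \<Rightarrow> bool list \<Rightarrow> bool list" where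
  "node_vals C x = foldl (\<lambda>vs (f, l, r). vs @ [f (vs ! l) (vs ! r)]) x (cgates C)"

definition circ_eval :: "circuit \<Rightarrow> bool list \<Rightarrow> bool list" where
  "circ_eval C x = map (\<lambda>q. node_vals C x ! q) (couts C)"

definition xor_circuit :: "circuit \<Rightarrow> bool" where
  "xor_circuit C \<longleftrightarrow> (\<forall>(f, l, r) \<in> set (cgates C). f = (\<lambda>a b. a \<noteq> b))"

text \<open>Feeding the outputs of G into the inputs of E (requires cin E = length (couts G)).\<close>
definition compose :: "circuit \<Rightarrow> circuit \<Rightarrow> circuit" where
  "compose G E =
     (let rn = (\<lambda>k. if k < cin E then couts G ! k
                    else cin G + length (cgates G) + (k - cin E))
      in \<lparr> cin = cin G,
           cgates = cgates G @ map (\<lambda>(f, l, r). (f, rn l, rn r)) (cgates E),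
           couts = map rn (couts E) \<rparr>)"

text \<open>A literal (v, c) expresses the equation v = c; a clause is a disjunction of
  literals; a CNF is a pair (number of variables, set of clauses).\<close>
type_synonym lit = "nat \<times> bool"
type_synonym clause = "lit list"
type_synonym cnf = "nat \<times> clause set"

definition clause_sat :: "(nat \<Rightarrow> bool) \<Rightarrow> clause \<Rightarrow> bool" where
  "clause_sat \<alpha> g \<longleftrightarrow> (\<exists>(v, c) \<in> set g. \<alpha> v = c)"

text \<open>Canonical CNF of the constraint v_g = v_l op v_r: for each pair (a,b) the clause
  (v_l \<noteq> a) \<or> (v_r \<noteq> b) \<or> (v_g = op a b).\<close>
definition gate_clauses :: "nat \<Rightarrow> (bool \<Rightarrow> bool \<Rightarrow> bool) \<Rightarrow> nat \<Rightarrow> nat \<Rightarrow> clause set" where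
  "gate_clauses g f l r = {[(l, \<not> a), (r, \<not> b), (g, f a b)] | a b. True}"

text \<open>tau_b(C): variables are the node indices (inputs, then internal gates).\<close>
definition tau :: "bool list \<Rightarrow> circuit \<Rightarrow> cnf" where
  "tau b C =
     (cin C + length (cgates C),
      (\<Union>j < length (cgates C). case cgates C ! j of (f, l, r) \<Rightarrow> gate_clauses (cin C + j) f l r)
      \<union> {[(couts C ! i, b ! i)] | i. i < length (couts C)})"

definition xor_sum :: "nat set \<Rightarrow> (nat \<Rightarrow> bool) \<Rightarrow> bool" where
  "xor_sum A x = odd (card {j \<in> A. x j})"

definition redu :: "(nat \<Rightarrow> nat set) \<Rightarrow> (nat \<Rightarrow> bool) \<Rightarrow> (nat \<Rightarrow> bool)" where
  "redu S x = (\<lambda>i. xor_sum (S i) x)"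

text \<open>Case (iii): clause g = [(i,c)] is the linear equation XOR(S i) = c; it must be
  the F2-sum of a subset T of width-1 clauses of F (clause [(j,b)] being x_j = b).\<close>
definition xor_of_unit_clauses :: "(nat \<Rightarrow> nat set) \<Rightarrow> clause \<Rightarrow> clause set \<Rightarrow> bool" where
  "xor_of_unit_clauses S g F \<longleftrightarrow>
     (\<exists>i c. g = [(i, c)] \<and>
        (\<exists>T \<subseteq> F. finite T \<and> (\<forall>h \<in> T. length h = 1) \<and>
           (\<forall>k. (k \<in> S i) = odd (card {h \<in> T. fst (hd h) = k})) \<and>
           c = odd (card {h \<in> T. snd (hd h)})))"

definition parity_reduces :: "cnf \<Rightarrow> cnf \<Rightarrow> bool" (infix "\<le>\<^sub>\<oplus>" 50) where
  "F \<le>\<^sub>\<oplus> H \<longleftrightarrow>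
     (\<exists>S. (\<forall>i < fst H. S i \<subseteq> {..<fst F}) \<and>
        (\<forall>g \<in> snd H.
            (\<forall>x. clause_sat (redu S x) g)
          \<or> (\<exists>h \<in> snd F. \<forall>x. clause_sat (redu S x) g = clause_sat x h)
          \<or> xor_of_unit_clauses S g (snd F)))"

end

theory Submission
  imports Defs
begin

definition sd :: "'a set \<Rightarrow> 'a set \<Rightarrow> 'a set" where
  "sd A B = (A - B) \<union> (B - A)"

lemma card_sd_odd:
  assumes "finite A" "finite B"
  shows "odd (card {h \<in> sd A B. p h}) = (odd (card {h \<in> A. p h}) \<noteq> odd (card {h \<in> B. p h}))"
proof -
  define A' where "A' = {h \<in> A. p h}"
  define B' where "B' = {h \<in> B. p h}"
  have fA: "finite A'" "finite B'" using assms by (auto simp: A'_def B'_def)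
  have eq: "{h \<in> sd A B. p h} = (A' \<union> B') - (A' \<inter> B')"
    by (auto simp: sd_def A'_def B'_def)
  have c1: "card ((A' \<union> B') - (A' \<inter> B')) = card (A' \<union> B') - card (A' \<inter> B')"
    using fA by (intro card_Diff_subset) auto
  have c2: "card A' + card B' = card (A' \<union> B') + card (A' \<inter> B')"
    using fA card_Un_Int by blast
  have c3: "card (A' \<inter> B') \<le> card (A' \<union> B')"
    using fA by (intro card_mono) auto
  show ?thesis unfolding eq c1 A'_def[symmetric] B'_def[symmetric]
    using c2 c3 by presburger
qed

function lin :: "circuit \<Rightarrow> (nat \<Rightarrow> 'a set) \<Rightarrow> nat \<Rightarrow> 'a set" where
  "lin E b q = (if q < cin E then b q
     else if q - cin E < length (cgates E) then
       (let g = cgates E ! (q - cin E) in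
         if fst (snd g) < q \<and> snd (snd g) < q then sd (lin E b (fst (snd g))) (lin E b (snd (snd g))) else {})
     else {})"
  by pat_completeness auto
termination by (relation "measure (\<lambda>(E, b, q). q)") auto

declare lin.simps[simp del]

lemma lin_gate:
  assumes "wf_circuit E" "j < length (cgates E)" "cgates E ! j = (f, l, r)"
  shows "lin E b (cin E + j) = sd (lin E b l) (lin E b r)"
proof -
  have "l < cin E + j" "r < cin E + j" using assms unfolding wf_circuit_def by fastforce+
  then show ?thesis using assms by (subst lin.simps) (simp add: Let_def)
qed

lemma lin_input: "q < cin E \<Longrightarrow> lin E b q = b q"
  by (subst lin.simps) simp

lemma lin_induct_prop:
  assumes "wf_circuit E"
    and base: "\<And>q. q < cin E \<Longrightarrow> P q"
    and step: "\<And>j f l r. j < length (cgates E) \<Longrightarrow> cgates E ! j = (f, l, r) \<Longrightarrow>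
                 l < cin E + j \<Longrightarrow> r < cin E + j \<Longrightarrow> P l \<Longrightarrow> P r \<Longrightarrow> P (cin E + j)"
  shows "q < cin E + length (cgates E) \<Longrightarrow> P q"
proof (induction q rule: less_induct)
  case (less q)
  show ?case
  proof (cases "q < cin E")
    case True then show ?thesis using base by auto
  next
    case False
    define j where "j = q - cin E"
    have q: "q = cin E + j" "j < length (cgates E)" using False less.prems by (auto simp: j_def)
    obtain f l r where g: "cgates E ! j = (f, l, r)" by (cases "cgates E ! j") auto
    have lr: "l < cin E + j" "r < cin E + j" using assms q g unfolding wf_circuit_def by fastforce+
    show ?thesis unfolding q(1)
      by (rule step[OF q(2) g lr]) (use less.IH q lr in auto)
  qed
qed

abbreviation stepF :: "bool list \<Rightarrow> (bool \<Rightarrow> bool \<Rightarrow> bool) \<times> nat \<times> nat \<Rightarrow> bool list" where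
  "stepF \<equiv> (\<lambda>vs (f, l, r). vs @ [f (vs ! l) (vs ! r)])"

lemma fold_len: "length (foldl stepF x gs) = length x + length gs"
  by (induction gs arbitrary: x) auto

lemma fold_prefix: "i < length x \<Longrightarrow> foldl stepF x gs ! i = x ! i"
proof (induction gs arbitrary: x)
  case Nil then show ?case by simp
next
  case (Cons g gs)
  obtain f l r where "g = (f, l, r)" by (cases g) auto
  then show ?case using Cons by (simp add: nth_append)
qed

lemma fold_gate:
  assumes "j < length gs" "gs ! j = (f, l, r)" "l < length x + j" "r < length x + j"
  shows "foldl stepF x gs ! (length x + j) = f (foldl stepF x gs ! l) (foldl stepF x gs ! r)"
proof -
  define W where "W = foldl stepF x (take j gs)"
  have lW: "length W = length x + j" using assms by (simp add: W_def fold_len)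
  have d: "drop j gs = (f, l, r) # drop (Suc j) gs" using Cons_nth_drop_Suc[OF assms(1)] assms(2) by simp
  have full: "foldl stepF x gs = foldl stepF (W @ [f (W ! l) (W ! r)]) (drop (Suc j) gs)"
  proof -
    have "foldl stepF x gs = foldl stepF W (drop j gs)"
      unfolding W_def by (metis append_take_drop_id foldl_append)
    then show ?thesis using d by simp
  qed
  have a: "foldl stepF x gs ! (length x + j) = f (W ! l) (W ! r)"
    unfolding full using lW by (subst fold_prefix) (auto simp: nth_append)
  have b: "foldl stepF x gs ! l = W ! l" "foldl stepF x gs ! r = W ! r"
    unfolding full using lW assms by (subst fold_prefix; auto simp: nth_append)+
  show ?thesis using a b by simp
qed

lemma nv_gate:
  assumes "wf_circuit E" "length u = cin E" "j < length (cgates E)" "cgates E ! j = (f, l, r)"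
  shows "node_vals E u ! (cin E + j) = f (node_vals E u ! l) (node_vals E u ! r)"
proof -
  have "l < cin E + j" "r < cin E + j" using assms unfolding wf_circuit_def by fastforce+
  then show ?thesis unfolding node_vals_def using fold_gate[OF assms(3,4), where x=u] assms(2) by simp
qed

lemma nv_input: "q < length u \<Longrightarrow> node_vals E u ! q = u ! q"
  unfolding node_vals_def by (rule fold_prefix)

lemma xor_sum_single: "xor_sum {i} x = x i"
proof -
  have "{j \<in> {i}. x j} = (if x i then {i} else {})" by auto
  then show ?thesis unfolding xor_sum_def by simp
qed

lemma xor_sum_sd: "finite A \<Longrightarrow> finite B \<Longrightarrow> xor_sum (sd A B) x = (xor_sum A x \<noteq> xor_sum B x)"
  unfolding xor_sum_def by (rule card_sd_odd)

theorem claim3p4: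
  fixes G :: circuit
    and Ext :: "bool list \<Rightarrow> bool list \<Rightarrow> bool list"
    and ExtC :: "bool list \<Rightarrow> circuit"
    and n N d m :: nat
    and y r :: "bool list"
  assumes G_wf: "wf_circuit G" and G_in: "cin G = n" and G_out: "length (couts G) = N"
    and Ext_len: "\<And>u s. length u = N \<Longrightarrow> length s = d \<Longrightarrow> length (Ext u s) = m"
    and Ext_lin: "\<And>u v s. length u = N \<Longrightarrow> length v = N \<Longrightarrow> length s = d \<Longrightarrow>
                   Ext (map2 (\<noteq>) u v) s = map2 (\<noteq>) (Ext u s) (Ext v s)"
    and ExtC_wf: "\<And>s. length s = d \<Longrightarrow> wf_circuit (ExtC s)"
    and ExtC_xor: "\<And>s. length s = d \<Longrightarrow> xor_circuit (ExtC s)"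
    and ExtC_in: "\<And>s. length s = d \<Longrightarrow> cin (ExtC s) = N"
    and ExtC_computes: "\<And>s u. length s = d \<Longrightarrow> length u = N \<Longrightarrow> circ_eval (ExtC s) u = Ext u s"
    and y_len: "length y = N" and r_len: "length r = d"
  shows "tau y G \<le>\<^sub>\<oplus> tau (Ext y r) (compose G (ExtC r))"
proof -
  define E where "E = ExtC r"
  have E_wf: "wf_circuit E" and E_xor: "xor_circuit E" and E_in: "cin E = N"
    using ExtC_wf ExtC_xor ExtC_in r_len by (auto simp: E_def)
  define nG where "nG = cin G + length (cgates G)"
  define C where "C = compose G E"
  define z where "z = Ext y r"
  define SE where "SE = lin E (\<lambda>q. {couts G ! q})"
  define TE where "TE = lin E (\<lambda>q. {[(couts G ! q, y ! q)]})"
  define S where "S = (\<lambda>i. if i < nG then {i} else SE (cin E + (i - nG)))"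
  define rn where "rn = (\<lambda>k. if k < cin E then couts G ! k else nG + (k - cin E))"
  define NE where "NE = cin E + length (cgates E)"
  have coutsG: "\<And>k. k < N \<Longrightarrow> couts G ! k < nG"
    using G_wf G_out unfolding wf_circuit_def nG_def by (metis nth_mem)
  have E_gate_xor: "\<And>j f l r. j < length (cgates E) \<Longrightarrow> cgates E ! j = (f, l, r) \<Longrightarrow> f = (\<lambda>a b. a \<noteq> b)"
    using E_xor unfolding xor_circuit_def by (metis (mono_tags, lifting) case_prodD nth_mem)
  have SEp: "\<And>q. q < NE \<Longrightarrow> finite (SE q) \<and> SE q \<subseteq> {..<nG}"
    unfolding NE_def
  proof (rule lin_induct_prop[OF E_wf, where P="\<lambda>q. finite (SE q) \<and> SE q \<subseteq> {..<nG}"])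
    fix q assume "q < cin E" then show "finite (SE q) \<and> SE q \<subseteq> {..<nG}"
      using coutsG E_in by (simp add: SE_def lin_input)
  next
    fix j f l r assume a: "j < length (cgates E)" "cgates E ! j = (f, l, r)"
      "finite (SE l) \<and> SE l \<subseteq> {..<nG}" "finite (SE r) \<and> SE r \<subseteq> {..<nG}"
    then show "finite (SE (cin E + j)) \<and> SE (cin E + j) \<subseteq> {..<nG}"
    proof -
      have "SE (cin E + j) = sd (SE l) (SE r)" unfolding SE_def by (rule lin_gate[OF E_wf a(1,2)])
      then show ?thesis using a(3,4) by (auto simp: sd_def)
    qed
  qed
  define UF where "UF = {[(couts G ! k, y ! k)] | k. k < N}"
  have TEp: "\<And>q. q < NE \<Longrightarrow> finite (TE q) \<and> TE q \<subseteq> UF \<and>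
      (\<forall>v. (v \<in> SE q) = odd (card {h \<in> TE q. fst (hd h) = v})) \<and>
      node_vals E y ! q = odd (card {h \<in> TE q. snd (hd h)})"
    unfolding NE_def
  proof (rule lin_induct_prop[OF E_wf, where P="\<lambda>q. finite (TE q) \<and> TE q \<subseteq> UF \<and>
      (\<forall>v. (v \<in> SE q) = odd (card {h \<in> TE q. fst (hd h) = v})) \<and>
      node_vals E y ! q = odd (card {h \<in> TE q. snd (hd h)})"])
    fix q assume q: "q < cin E"
    have "TE q = {[(couts G ! q, y ! q)]}" "SE q = {couts G ! q}"
      using q by (simp_all add: SE_def TE_def lin_input)
    moreover have "node_vals E y ! q = y ! q" using q y_len E_in by (simp add: nv_input)
    moreover have "\<And>P. {h \<in> {[(couts G ! q, y ! q)]}. P h} = (if P [(couts G ! q, y ! q)] then {[(couts G ! q, y ! q)]} else {})"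
      by auto
    ultimately show "finite (TE q) \<and> TE q \<subseteq> UF \<and>
      (\<forall>v. (v \<in> SE q) = odd (card {h \<in> TE q. fst (hd h) = v})) \<and>
      node_vals E y ! q = odd (card {h \<in> TE q. snd (hd h)})"
      using q E_in by (auto simp: UF_def)
  next
    fix j f l r assume a: "j < length (cgates E)" "cgates E ! j = (f, l, r)"
      "l < cin E + j" "r < cin E + j"
      and IHl: "finite (TE l) \<and> TE l \<subseteq> UF \<and>
      (\<forall>v. (v \<in> SE l) = odd (card {h \<in> TE l. fst (hd h) = v})) \<and>
      node_vals E y ! l = odd (card {h \<in> TE l. snd (hd h)})"
      and IHr: "finite (TE r) \<and> TE r \<subseteq> UF \<and>
      (\<forall>v. (v \<in> SE r) = odd (card {h \<in> TE r. fst (hd h) = v})) \<and>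
      node_vals E y ! r = odd (card {h \<in> TE r. snd (hd h)})"
    have T: "TE (cin E + j) = sd (TE l) (TE r)" unfolding TE_def by (rule lin_gate[OF E_wf a(1,2)])
    have Sq: "SE (cin E + j) = sd (SE l) (SE r)" unfolding SE_def by (rule lin_gate[OF E_wf a(1,2)])
    have f: "f = (\<lambda>a b. a \<noteq> b)" using E_gate_xor a(1,2) .
    have nv: "node_vals E y ! (cin E + j) = (node_vals E y ! l \<noteq> node_vals E y ! r)"
      using nv_gate[OF E_wf _ a(1,2), of y] y_len E_in f by simp
    show "finite (TE (cin E + j)) \<and> TE (cin E + j) \<subseteq> UF \<and>
      (\<forall>v. (v \<in> SE (cin E + j)) = odd (card {h \<in> TE (cin E + j). fst (hd h) = v})) \<and>
      node_vals E y ! (cin E + j) = odd (card {h \<in> TE (cin E + j). snd (hd h)})"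
      unfolding T Sq nv
      using IHl IHr card_sd_odd[of "TE l" "TE r"] by (auto simp: sd_def)
  qed
  have Srn: "\<And>q. q < NE \<Longrightarrow> S (rn q) = SE q"
  proof -
    fix q assume q: "q < NE"
    show "S (rn q) = SE q"
    proof (cases "q < cin E")
      case True
      then show ?thesis using coutsG E_in by (simp add: S_def rn_def SE_def lin_input)
    next
      case False
      then have "rn q = nG + (q - cin E)" by (simp add: rn_def)
      moreover have "\<not> (nG + (q - cin E) < nG)" by simp
      ultimately show ?thesis using False unfolding S_def by simp
    qed
  qed
  have Sid: "\<And>v. v < nG \<Longrightarrow> S v = {v}" by (simp add: S_def)
  have C_in: "cin C = cin G"
    and C_gates: "cgates C = cgates G @ map (\<lambda>(f, l, r). (f, rn l, rn r)) (cgates E)"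
    and C_outs: "couts C = map rn (couts E)"
    unfolding C_def compose_def rn_def nG_def Let_def by simp_all
  have fstH: "fst (tau z C) = nG + length (cgates E)"
    by (simp add: tau_def C_in C_gates nG_def)
  have fstF: "fst (tau y G) = nG" by (simp add: tau_def nG_def)
  have sndF: "snd (tau y G) = (\<Union>j < length (cgates G). case cgates G ! j of (f, l, r) \<Rightarrow> gate_clauses (cin G + j) f l r)
      \<union> {[(couts G ! i, y ! i)] | i. i < length (couts G)}" by (simp add: tau_def)
  have bounds: "\<forall>i < fst (tau z C). S i \<subseteq> {..<fst (tau y G)}"
  proof (intro allI impI)
    fix i assume "i < fst (tau z C)"
    then have "i < nG + length (cgates E)" using fstH by simp
    show "S i \<subseteq> {..<fst (tau y G)}"
    proof (cases "i < nG")
      case True then show ?thesis unfolding fstF S_def by simp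
    next
      case False
      then have "cin E + (i - nG) < NE" using \<open>i < nG + length (cgates E)\<close> by (simp add: NE_def)
      then show ?thesis using SEp False unfolding fstF S_def by simp
    qed
  qed
  have clauses: "\<forall>g \<in> snd (tau z C).
            (\<forall>x. clause_sat (redu S x) g)
          \<or> (\<exists>h \<in> snd (tau y G). \<forall>x. clause_sat (redu S x) g = clause_sat x h)
          \<or> xor_of_unit_clauses S g (snd (tau y G))"
  proof
    fix g assume g: "g \<in> snd (tau z C)"
    then have "g \<in> (\<Union>j < length (cgates C). case cgates C ! j of (f, l, r) \<Rightarrow> gate_clauses (cin C + j) f l r)
      \<or> g \<in> {[(couts C ! i, z ! i)] | i. i < length (couts C)}" by (simp add: tau_def)
    then show "(\<forall>x. clause_sat (redu S x) g)
          \<or> (\<exists>h \<in> snd (tau y G). \<forall>x. clause_sat (redu S x) g = clause_sat x h)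
          \<or> xor_of_unit_clauses S g (snd (tau y G))"
    proof
      assume "g \<in> (\<Union>j < length (cgates C). case cgates C ! j of (f, l, r) \<Rightarrow> gate_clauses (cin C + j) f l r)"
      then obtain j where j0: "j \<in> {..<length (cgates C)}"
        and gj: "g \<in> (case cgates C ! j of (f, l, r) \<Rightarrow> gate_clauses (cin C + j) f l r)" by (rule UN_E)
      from j0 have j: "j < length (cgates C)" by simp
      show ?thesis
      proof (cases "j < length (cgates G)")
        case True
        obtain f l r where fl: "cgates G ! j = (f, l, r)" by (cases "cgates G ! j") auto
        have cj: "cgates C ! j = (f, l, r)" using True fl by (simp add: C_gates nth_append)
        have lr: "l < cin G + j" "r < cin G + j" using G_wf True fl unfolding wf_circuit_def by fastforce+
        have gG: "g \<in> gate_clauses (cin G + j) f l r" using gj cj C_in by simp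
        have "g \<in> (case cgates G ! j of (f, l, r) \<Rightarrow> gate_clauses (cin G + j) f l r)"
          using gG fl by simp
        then have "g \<in> (\<Union>j < length (cgates G). case cgates G ! j of (f, l, r) \<Rightarrow> gate_clauses (cin G + j) f l r)"
          using True by (intro UN_I[of j]) simp_all
        then have "g \<in> snd (tau y G)" unfolding sndF by (rule UnI1)
        moreover have "\<forall>x. clause_sat (redu S x) g = clause_sat x g"
        proof
          fix x
          obtain a b where gab: "g = [(l, \<not> a), (r, \<not> b), (cin G + j, f a b)]"
            using gG unfolding gate_clauses_def by blast
          have "l < nG" "r < nG" "cin G + j < nG" using lr True by (auto simp: nG_def)
          then show "clause_sat (redu S x) g = clause_sat x g"
            unfolding gab clause_sat_def redu_def using Sid xor_sum_single by simp
        qed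
        ultimately show ?thesis by blast
      next
        case False
        define j' where "j' = j - length (cgates G)"
        have j': "j' < length (cgates E)" "j = length (cgates G) + j'"
          using False j by (auto simp: j'_def C_gates)
        obtain f l r where fl: "cgates E ! j' = (f, l, r)" by (cases "cgates E ! j'") auto
        have cj: "cgates C ! j = (f, rn l, rn r)" using j' fl by (simp add: C_gates nth_append)
        have lr: "l < cin E + j'" "r < cin E + j'" using E_wf j' fl unfolding wf_circuit_def by fastforce+
        have f: "f = (\<lambda>a b. a \<noteq> b)" using E_gate_xor j'(1) fl .
        have gE: "g \<in> gate_clauses (nG + j') f (rn l) (rn r)" using gj cj C_in j'(2) by (simp add: nG_def add.assoc)
        obtain a b where gab: "g = [(rn l, \<not> a), (rn r, \<not> b), (nG + j', f a b)]"
          using gE unfolding gate_clauses_def by blast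
        have SG: "S (nG + j') = sd (SE l) (SE r)"
          unfolding S_def SE_def using lin_gate[OF E_wf j'(1) fl] by simp
        have "\<forall>x. clause_sat (redu S x) g"
        proof
          fix x
          have lN: "l < NE" "r < NE" using lr j' by (auto simp: NE_def)
          have "xor_sum (S (nG + j')) x = (xor_sum (S (rn l)) x \<noteq> xor_sum (S (rn r)) x)"
            unfolding SG Srn[OF lN(1)] Srn[OF lN(2)]
            by (rule xor_sum_sd) (use SEp[OF lN(1)] SEp[OF lN(2)] in blast)+
          then have "redu S x (nG + j') = (redu S x (rn l) \<noteq> redu S x (rn r))"
            by (simp add: redu_def)
          then show "clause_sat (redu S x) g" unfolding gab clause_sat_def f by auto
        qed
        then show ?thesis by blast
      qed
    next
      assume "g \<in> {[(couts C ! i, z ! i)] | i. i < length (couts C)}"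
      then obtain i where i: "i < length (couts E)" and gi: "g = [(couts C ! i, z ! i)]"
        by (auto simp: C_outs)
      define q where "q = couts E ! i"
      have qN: "q < NE" using E_wf i unfolding wf_circuit_def NE_def q_def by auto
      have ci: "couts C ! i = rn q" using i by (simp add: C_outs q_def)
      have zi: "z ! i = node_vals E y ! q"
      proof -
        have "z = map (\<lambda>q. node_vals E y ! q) (couts E)"
          using ExtC_computes[OF r_len y_len] unfolding z_def E_def circ_eval_def by simp
        then show ?thesis using i by (simp add: q_def)
      qed
      have UFsub: "UF \<subseteq> snd (tau y G)" unfolding sndF UF_def G_out by blast
      have "xor_of_unit_clauses S g (snd (tau y G))"
        unfolding xor_of_unit_clauses_def
      proof (intro exI conjI)
        show "g = [(rn q, z ! i)]" using gi ci by simp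
        show "TE q \<subseteq> snd (tau y G)" using TEp[OF qN] UFsub by blast
        show "finite (TE q)" using TEp[OF qN] by blast
        show "\<forall>h \<in> TE q. length h = 1" using TEp[OF qN] unfolding UF_def by auto
        show "\<forall>k. (k \<in> S (rn q)) = odd (card {h \<in> TE q. fst (hd h) = k})"
          using TEp[OF qN] Srn[OF qN] by simp
        show "z ! i = odd (card {h \<in> TE q. snd (hd h)})" using TEp[OF qN] zi by simp
      qed
      then show ?thesis by blast
    qed
  qed
  show ?thesis unfolding parity_reduces_def C_def[symmetric] z_def[symmetric] E_def[symmetric]
    using bounds clauses by blast
qed

end
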